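(* Let $i,k\ge 3$ be integers and put $r=\lfloor (L_i-1)/F_k\rfloor$. Then $$g_0(L_i,L_{i+2},L_{i+k})=\begin{cases}(L_i-1)L_{i+2}-L_i(rF_{k-2}+1) & \text{if } r=0, \text{ or } r\ge 1 \text{ and } (L_i-rF_k)L_{i+2}>F_{k-2}L_i,\\ (rF_k-1)L_{i+2}-L_i\bigl((r-1)F_{k-2}+1\bigr) & \text{otherwise.}\end{cases}$$
   Context: Fibonacci numbers: $F_0=0$, $F_1=1$, $F_n=F_{n-1}+F_{n-2}$. Lucas numbers: $L_0=2$, $L_1=1$, $L_n=L_{n-1}+L_{n-2}$. For positive integers $a_1,\dots,a_l$ with $\gcd(a_1,\dots,a_l)=1$ and an integer $n$, let $d(n;a_1,\dots,a_l)$ be the number of tuples $(x_1,\dots,x_l)$ of nonnegative integers with $a_1x_1+\dots+a_lx_l=n$. For a nonnegative integer $p$, the $p$-Frobenius number $g_p(a_1,\dots,a_l)$ is the largest integer $n$ with $d(n;a_1,\dots,a_l)\le p$ (so $g_0$ is the classical Frobenius number). *)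

theory Defs
  imports Main "HOL-Number_Theory.Fib"
begin

fun lucas :: "nat \<Rightarrow> nat" where
  "lucas 0 = 2"
| "lucas (Suc 0) = 1"
| "lucas (Suc (Suc n)) = lucas (Suc n) + lucas n"

definition num_reps :: "int \<Rightarrow> nat list \<Rightarrow> nat" where
  "num_reps n as = card {xs :: nat list. length xs = length as \<and>
      int (\<Sum>j<length as. as ! j * xs ! j) = n}"

definition p_frobenius :: "nat \<Rightarrow> nat list \<Rightarrow> int" where
  "p_frobenius p as = (GREATEST n :: int. num_reps n as \<le> p)"

end

theory Submission
  imports Defs "HOL-Number_Theory.Cong"
begin

lemma small_mult:
  fixes a m :: int
  assumes "a > 0" "-a < a*m" "a*m < a" shows "m = 0"
proof (rule ccontr)
  assume "m \<noteq> 0"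
  hence "m \<ge> 1 \<or> m \<le> -1" by linarith
  thus False
  proof
    assume "m \<ge> 1" hence "a*1 \<le> a*m" using mult_left_mono[of 1 m a] assms by simp
    thus False using assms by linarith
  next
    assume "m \<le> -1" hence "a*m \<le> a*(-1)" using mult_left_mono[of m "-1" a] assms by simp
    thus False using assms by linarith
  qed
qed

lemma nonrep:
  fixes a b c F G T x y z :: int
  assumes a: "a > 0" and b: "2*a \<le> b" and F: "F > 0" and G: "0 < G" "G \<le> F"
    and cop: "coprime a b" and c: "c = F*b - G*a"
    and T: "0 \<le> T" "T < a"
    and xyz: "x \<ge> 0" "y \<ge> 0" "z \<ge> 0"
    and eq: "T*b - (T div F)*G*a - a = a*x + b*y + c*z"
  shows False
proof -
  define s where "s = y + F*z"
  have s0: "s \<ge> 0" using xyz F s_def by simp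
  have Fz: "F*z \<le> s" using s_def xyz by simp
  have e2: "(T - s)*b = a*(x+1) - z*G*a + (T div F)*G*a"
    using eq unfolding c s_def by (simp add: algebra_simps)
  have "a dvd (T - s)*b" unfolding e2 by simp
  hence advd: "a dvd (T - s)" using cop by (simp add: coprime_dvd_mult_left_iff)
  show False
  proof (cases "s < a")
    case True
    have "T = s"
    proof -
      obtain m where m: "T - s = a*m" using advd by blast
      have "-a < a*m" "a*m < a" using m True T s0 by linarith+
      hence "m = 0" using a small_mult by blast
      thus ?thesis using m by simp
    qed
    have zle: "z \<le> T div F"
    proof -
      have "z*F \<le> T" using Fz \<open>T = s\<close> by (simp add: mult.commute)
      hence "z*F div F \<le> T div F" using F by (intro zdiv_mono1) auto
      thus ?thesis using F by simp
    qed
    have "a*(x+1) = (z - T div F)*G*a" using e2 \<open>T = s\<close> by (simp add: algebra_simps)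
    moreover have "(z - T div F)*G*a \<le> 0" using zle G a
      by (simp add: mult_nonpos_nonneg)
    moreover have "a*(x+1) > 0" using a xyz by simp
    ultimately show False by linarith
  next
    case False
    obtain m where m: "T - s = a*m" using advd by blast
    have "m < 0"
    proof (rule ccontr)
      assume "\<not> m < 0" hence "a*m \<ge> 0" using a by simp
      thus False using m False T by linarith
    qed
    hence "m \<le> -1" by simp
    hence "a*m \<le> a*(-1)" using a mult_left_mono[of m "-1" a] by simp
    hence sT: "s \<ge> T + a" using m by simp
    have wle: "T*b - (T div F)*G*a \<le> T*b"
      using T F G a by (simp add: pos_imp_zdiv_nonneg_iff)
    have hF: "F*(T*b - (T div F)*G*a) = F*a*(x+1) + F*s*b - (F*z)*G*a"
    proof -
      have eqF: "F*(T*b - (T div F)*G*a - a) = F*(a*x + b*y + c*z)" using eq by simp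
      thus ?thesis unfolding c s_def by (simp add: algebra_simps)
    qed
    have hfz: "(F*z)*G*a \<le> s*G*a" using Fz G a by simp
    have h0: "0 \<le> F*a*x" using xyz F a by simp
    have h1: "F*a*(x+1) + F*s*b - (F*z)*G*a \<ge> F*a + s*(F*b - G*a)"
    proof -
      have "F*a*(x+1) + F*s*b - (F*z)*G*a - (F*a + s*(F*b - G*a)) = F*a*x + (s*G*a - (F*z)*G*a)"
        by (simp add: algebra_simps)
      thus ?thesis using h0 hfz by linarith
    qed
    have h2: "s*(F*b - G*a) \<ge> (T+a)*(F*b - G*a)"
    proof -
      have "G*a \<le> F*b" using G b a by (intro mult_mono) auto
      thus ?thesis using sT by (intro mult_right_mono) auto
    qed
    have h3: "F*(T*b - (T div F)*G*a) \<le> F*(T*b)" using wle F by simp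
    have h4: "F*(T*b) \<ge> F*a + (T+a)*(F*b - G*a)" using hF h1 h2 h3 by linarith
    hence "(T+a)*G*a \<ge> F*a + a*F*b" by (simp add: algebra_simps)
    hence "a*((T+a)*G) \<ge> a*(F + F*b)" by (simp add: algebra_simps)
    hence h5: "(T+a)*G \<ge> F + F*b" using a by simp
    have h6: "(T+a)*G \<le> (2*a)*F" using T G by (intro mult_mono) auto
    have h7: "(2*a)*F \<le> b*F" using b F by (intro mult_right_mono) auto
    have "(2*a)*F = F*(2*a)" "b*F = F*b" by (simp_all add: mult.commute)
    thus False using F h5 h6 h7 by linarith
  qed
qed

lemma rep:
  fixes a b c F G V n :: int
  assumes a: "a > 0" and F: "F > 0" and cop: "coprime a b" and c: "c = F*b - G*a"
    and maxw: "\<And>t. 0 \<le> t \<Longrightarrow> t < a \<Longrightarrow> t*b - (t div F)*G*a \<le> V"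
    and n: "n > V - a"
  shows "\<exists>x y z. x \<ge> 0 \<and> y \<ge> 0 \<and> z \<ge> 0 \<and> n = a*x + b*y + c*z"
proof -
  have "coprime b a" using cop by (simp add: coprime_commute)
  then obtain u where "[b*u = 1] (mod a)" using cong_solve_coprime_int by blast
  hence du: "a dvd b*u - 1" by (simp add: cong_iff_dvd_diff)
  define t where "t = (n*u) mod a"
  have t0: "0 \<le> t" "t < a" using a t_def by auto
  have "t*b - n = n*(b*u - 1) - a*((n*u) div a)*b"
    unfolding t_def by (simp add: algebra_simps minus_div_mult_eq_mod[symmetric])
  hence dt: "a dvd t*b - n" using du by simp
  define w where "w = t*b - (t div F)*G*a"
  have eqw: "n - w = -(t*b - n) + (t div F)*G*a" unfolding w_def by simp
  have "a dvd -(t*b - n) + (t div F)*G*a" using dt by (intro dvd_add) (simp_all only: dvd_minus_iff, simp)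
  hence "a dvd n - w" unfolding eqw .
  then obtain x where x: "n - w = a*x" by blast
  have "w \<le> V" unfolding w_def using maxw t0 by blast
  hence "a*x > -a" using x n by linarith
  have x0: "x \<ge> 0"
  proof (rule ccontr)
    assume "\<not> x \<ge> 0" hence "x \<le> -1" by simp
    hence "a*x \<le> a*(-1)" using a mult_left_mono[of x "-1" a] by simp
    thus False using \<open>a*x > -a\<close> by simp
  qed
  have "b*(t mod F) + c*(t div F) = w"
  proof -
    have gen: "\<And>m q. b*m + c*q = b*(m + F*q) - q*G*a"
      unfolding c by (simp add: algebra_simps)
    have "b*(t mod F) + c*(t div F) = b*(t mod F + F*(t div F)) - (t div F)*G*a"
      by (rule gen)
    also have "t mod F + F*(t div F) = t" by simp
    finally show ?thesis unfolding w_def by (metis mult.commute)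
  qed
  hence "n = a*x + b*(t mod F) + c*(t div F)" using x by simp
  moreover have "t mod F \<ge> 0" "t div F \<ge> 0" using F t0 by (auto simp: pos_imp_zdiv_nonneg_iff)
  ultimately show ?thesis using x0 by blast
qed

lemma maxw:
  fixes a b F G r t :: int
  assumes a: "a > 0" and b: "b \<ge> 0" and F: "F > 0" and G: "G \<ge> 0" and FG: "G*a \<le> F*b"
    and r: "r = (a-1) div F" and t: "0 \<le> t" "t < a"
  shows "t*b - (t div F)*G*a \<le> (a-1)*b - r*G*a \<or>
         (r \<ge> 1 \<and> t*b - (t div F)*G*a \<le> (r*F-1)*b - (r-1)*G*a)"
proof -
  define q where "q = t div F"
  have qr: "q \<le> r" unfolding q_def r using t F by (intro zdiv_mono1) auto
  have q0: "q \<ge> 0" unfolding q_def using t F by (simp add: pos_imp_zdiv_nonneg_iff)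
  show ?thesis
  proof (cases "q = r")
    case True
    have "t*b \<le> (a-1)*b" using t b by (intro mult_right_mono) auto
    thus ?thesis using True q_def by simp
  next
    case False
    hence qr': "q + 1 \<le> r" using qr by simp
    have "t = F*q + t mod F" unfolding q_def by simp
    moreover have "t mod F < F" using F by simp
    ultimately have "t \<le> q*F + F - 1" by (simp add: mult.commute)
    hence h1: "t*b \<le> (q*F + F - 1)*b" using b by (intro mult_right_mono) auto
    have h2: "(r*F-1)*b - (r-1)*G*a - ((q*F + F - 1)*b - q*G*a) = (r - 1 - q)*(F*b - G*a)"
      by (simp add: algebra_simps)
    have "(r - 1 - q)*(F*b - G*a) \<ge> 0" using qr' FG by simp
    hence "t*b - q*G*a \<le> (r*F-1)*b - (r-1)*G*a" using h1 h2 by linarith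
    thus ?thesis using qr' q0 q_def by auto
  qed
qed

lemma frob_abstract:
  fixes a b c F G r :: int
  assumes a: "a > 0" and b: "2*a \<le> b" and F: "F > 0" and G: "0 < G" "G \<le> F"
    and cop: "coprime a b" and c: "c = F*b - G*a"
    and r: "r = (a-1) div F"
  shows "(GREATEST n. \<not> (\<exists>x y z. x \<ge> 0 \<and> y \<ge> 0 \<and> z \<ge> 0 \<and> n = a*x + b*y + c*z)) =
    (if r = 0 \<or> (r \<ge> 1 \<and> (a - r*F)*b > G*a)
     then (a - 1)*b - a*(r*G + 1) else (r*F - 1)*b - a*((r - 1)*G + 1))"
proof -
  define w where "w t = t*b - (t div F)*G*a" for t
  define W1 where "W1 = (a-1)*b - r*G*a"
  define W2 where "W2 = (r*F-1)*b - (r-1)*G*a"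
  have FG: "G*a \<le> F*b" using G a b by (intro mult_mono) auto
  have r0: "r \<ge> 0" unfolding r using a F by (simp add: pos_imp_zdiv_nonneg_iff)
  have wmax: "w t \<le> W1 \<or> (r \<ge> 1 \<and> w t \<le> W2)" if "0 \<le> t" "t < a" for t
    unfolding w_def W1_def W2_def using maxw[OF a _ F _ FG r that] b G a by auto
  have w1: "w (a-1) = W1" unfolding w_def W1_def r by simp
  have w2: "w (r*F-1) = W2" if "r \<ge> 1"
  proof -
    have "(r*F-1) div F = r - 1"
    proof -
      have "r*F - 1 = (F - 1) + (r-1)*F" by (simp add: algebra_simps)
      hence "(r*F-1) div F = ((F-1) + (r-1)*F) div F" by (simp only:)
      also have "\<dots> = (F-1) div F + (r-1)" using F by simp
      also have "(F-1) div F = 0" using F by simp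
      finally show ?thesis by simp
    qed
    thus ?thesis unfolding w_def W2_def by simp
  qed
  have rF: "r*F \<le> a - 1"
  proof -
    have "(a-1) div F * F = (a-1) - (a-1) mod F" by (simp add: minus_mod_eq_div_mult)
    moreover have "(a-1) mod F \<ge> 0" using F by simp
    ultimately show ?thesis unfolding r by linarith
  qed
  define V where "V = (if r = 0 \<or> (r \<ge> 1 \<and> (a - r*F)*b > G*a) then W1 else W2)"
  have diff: "W1 - W2 = (a - r*F)*b - G*a" unfolding W1_def W2_def by (simp add: algebra_simps)
  obtain T where T: "0 \<le> T" "T < a" "w T = V"
  proof (cases "r = 0 \<or> (r \<ge> 1 \<and> (a - r*F)*b > G*a)")
    case True
    then show ?thesis using that[of "a-1"] w1 a unfolding V_def by auto
  next
    case False
    hence "r \<ge> 1" using r0 by auto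
    moreover have "r*F \<ge> 1" using \<open>r \<ge> 1\<close> F
      by (metis mult_le_cancel_left1 mult.commute zero_less_one less_le_trans
          mult_right_mono less_imp_le mult_1 zless_imp_add1_zle add_0 order_trans linorder_not_less)
    ultimately show ?thesis using that[of "r*F-1"] w2 False rF unfolding V_def by auto
  qed
  have maxV: "w t \<le> V" if "0 \<le> t" "t < a" for t
    using wmax[OF that] diff r0 unfolding V_def by auto
  have Vform: "V - a = (if r = 0 \<or> (r \<ge> 1 \<and> (a - r*F)*b > G*a)
     then (a - 1)*b - a*(r*G + 1) else (r*F - 1)*b - a*((r - 1)*G + 1))"
    unfolding V_def W1_def W2_def by (simp add: algebra_simps)
  have "(GREATEST n. \<not> (\<exists>x y z. x \<ge> 0 \<and> y \<ge> 0 \<and> z \<ge> 0 \<and> n = a*x + b*y + c*z)) = V - a"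
  proof (rule Greatest_equality)
    show "\<not> (\<exists>x y z. x \<ge> 0 \<and> y \<ge> 0 \<and> z \<ge> 0 \<and> V - a = a*x + b*y + c*z)"
    proof
      assume "\<exists>x y z. x \<ge> 0 \<and> y \<ge> 0 \<and> z \<ge> 0 \<and> V - a = a*x + b*y + c*z"
      then obtain x y z where xyz: "x \<ge> 0" "y \<ge> 0" "z \<ge> 0" "V - a = a*x + b*y + c*z" by blast
      have "T*b - (T div F)*G*a - a = a*x + b*y + c*z" using xyz T(3) unfolding w_def by simp
      thus False using nonrep[OF a b F G cop c T(1,2) xyz(1-3)] by blast
    qed
  next
    fix n assume "\<not> (\<exists>x y z. x \<ge> 0 \<and> y \<ge> 0 \<and> z \<ge> 0 \<and> n = a*x + b*y + c*z)"
    moreover have "n > V - a \<Longrightarrow> \<exists>x y z. x \<ge> 0 \<and> y \<ge> 0 \<and> z \<ge> 0 \<and> n = a*x + b*y + c*z"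
      using rep[OF a F cop c, of V n] maxV unfolding w_def by blast
    ultimately show "n \<le> V - a" by (meson not_le)
  qed
  thus ?thesis using Vform by simp
qed

lemma lucas_pos: "lucas n > 0"
  by (induction n rule: lucas.induct) auto

lemma lucas_add: "lucas (Suc (Suc (n + m))) + fib m * lucas n = fib (Suc (Suc m)) * lucas (Suc (Suc n))"
proof (induction m rule: fib.induct)
  case 1 then show ?case by simp
next
  case 2 then show ?case by simp
next
  case (3 m)
  then show ?case by (simp add: algebra_simps)
qed

lemma lucas_k: "k \<ge> 2 \<Longrightarrow> lucas (i + k) + fib (k-2) * lucas i = fib k * lucas (i+2)"
proof -
  assume "k \<ge> 2"
  then obtain m where m: "k = Suc (Suc m)" by (metis add_2_eq_Suc le_Suc_ex)
  show ?thesis using lucas_add[of i m] m by simp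
qed

lemma lucas_coprime: "coprime (lucas n) (lucas (Suc n))"
proof (induction n)
  case 0 then show ?case by simp
next
  case (Suc n)
  have "gcd (lucas n) (lucas (Suc n)) = 1" using Suc by (simp add: coprime_iff_gcd_eq_1)
  hence "gcd (lucas (Suc n)) (lucas (Suc n) + lucas n) = 1" by (simp add: gcd.commute)
  thus ?case by (simp add: coprime_iff_gcd_eq_1 add.commute)
qed

lemma lucas_coprime2: "coprime (lucas n) (lucas (n+2))"
proof -
  have "gcd (lucas n) (lucas (Suc n)) = 1" using lucas_coprime[of n] by (simp add: coprime_iff_gcd_eq_1)
  hence "gcd (lucas n) (lucas n + lucas (Suc n)) = 1" by simp
  thus ?thesis by (simp add: coprime_iff_gcd_eq_1 add.commute)
qed

lemma lucas_ge2: "n \<ge> 1 \<Longrightarrow> 2 * lucas n \<le> lucas (n+2)"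
proof -
  assume "n \<ge> 1"
  then obtain m where m: "n = Suc m" by (cases n) auto
  have "lucas (Suc (Suc m)) = lucas (Suc m) + lucas m" by simp
  hence "lucas (Suc m) \<le> lucas (Suc (Suc m))" by simp
  moreover have "lucas (Suc m + 2) = lucas (Suc (Suc m)) + lucas (Suc m)"
    by (metis add_2_eq_Suc' lucas.simps(3))
  ultimately show ?thesis using m by simp
qed

lemma len3: "length xs = 3 \<Longrightarrow> \<exists>x y z. xs = [x,y,z]"
  by (cases xs; cases "tl xs"; cases "tl (tl xs)") (auto simp: numeral_3_eq_3)

lemma num_reps3:
  fixes a b c :: nat
  assumes "a > 0" "b > 0" "c > 0"
  shows "(num_reps n [a,b,c] \<le> 0) \<longleftrightarrow>
    \<not> (\<exists>x y z. x \<ge> 0 \<and> y \<ge> 0 \<and> z \<ge> 0 \<and> n = int a*x + int b*y + int c*z)"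
proof -
  define S where "S = {xs :: nat list. length xs = length [a,b,c] \<and>
      int (\<Sum>j<length [a,b,c]. [a,b,c] ! j * xs ! j) = n}"
  have S: "S = {xs. length xs = 3 \<and> int (a * xs!0 + b * xs!1 + c * xs!2) = n}"
    unfolding S_def by (simp add: numeral_3_eq_3 lessThan_Suc add.commute add.left_commute numeral_2_eq_2)
  have nr: "num_reps n [a,b,c] = card S" unfolding num_reps_def S_def by simp
  have fin: "finite S"
  proof (rule finite_subset)
    show "S \<subseteq> {xs. set xs \<subseteq> {..nat n} \<and> length xs = 3}"
    proof
      fix xs assume "xs \<in> S"
      hence l: "length xs = 3" and e: "int (a * xs!0 + b * xs!1 + c * xs!2) = n" unfolding S by auto
      obtain x y z where xs: "xs = [x,y,z]" using len3[OF l] by blast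
      have "x \<le> a*x" "y \<le> b*y" "z \<le> c*z" using assms by auto
      moreover have "nat n = a*x + b*y + c*z" using e xs by (metis nat_int nth_Cons_0 nth_Cons_Suc One_nat_def numeral_2_eq_2)
      ultimately have "x \<le> nat n" "y \<le> nat n" "z \<le> nat n" by linarith+
      thus "xs \<in> {xs. set xs \<subseteq> {..nat n} \<and> length xs = 3}" using xs by auto
    qed
    show "finite {xs. set xs \<subseteq> {..nat n} \<and> length xs = 3}"
      by (rule finite_lists_length_eq) simp
  qed
  show ?thesis
  proof
    assume "num_reps n [a,b,c] \<le> 0"
    hence "S = {}" using nr fin by simp
    show "\<not> (\<exists>x y z. x \<ge> 0 \<and> y \<ge> 0 \<and> z \<ge> 0 \<and> n = int a*x + int b*y + int c*z)"
    proof
      assume "\<exists>x y z. x \<ge> 0 \<and> y \<ge> 0 \<and> z \<ge> 0 \<and> n = int a*x + int b*y + int c*z"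
      then obtain x y z where h: "x \<ge> 0" "y \<ge> 0" "z \<ge> 0" "n = int a*x + int b*y + int c*z" by blast
      have "[nat x, nat y, nat z] \<in> S" unfolding S using h by simp
      thus False using \<open>S = {}\<close> by simp
    qed
  next
    assume h: "\<not> (\<exists>x y z. x \<ge> 0 \<and> y \<ge> 0 \<and> z \<ge> 0 \<and> n = int a*x + int b*y + int c*z)"
    have "S = {}"
    proof (rule ccontr)
      assume "S \<noteq> {}"
      then obtain xs where "xs \<in> S" by blast
      hence l: "length xs = 3" and e: "int (a * xs!0 + b * xs!1 + c * xs!2) = n" unfolding S by auto
      have "n = int a * int (xs!0) + int b * int (xs!1) + int c * int (xs!2)" using e by simp
      thus False using h by (metis of_nat_0_le_iff)
    qed
    thus "num_reps n [a,b,c] \<le> 0" using nr by simp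
  qed
qed

theorem theorem1:
  fixes i k :: nat
  assumes "i \<ge> 3" and "k \<ge> 3"
  defines "r \<equiv> (int (lucas i) - 1) div int (fib k)"
  shows "p_frobenius 0 [lucas i, lucas (i + 2), lucas (i + k)] =
    (if r = 0 \<or> (r \<ge> 1 \<and> (int (lucas i) - r * int (fib k)) * int (lucas (i + 2))
                     > int (fib (k - 2)) * int (lucas i))
     then (int (lucas i) - 1) * int (lucas (i + 2)) - int (lucas i) * (r * int (fib (k - 2)) + 1)
     else (r * int (fib k) - 1) * int (lucas (i + 2)) - int (lucas i) * ((r - 1) * int (fib (k - 2)) + 1))"
proof -
  define a where "a = int (lucas i)"
  define b where "b = int (lucas (i+2))"
  define c where "c = int (lucas (i+k))"
  define F where "F = int (fib k)"
  define G where "G = int (fib (k-2))"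
  have a: "a > 0" unfolding a_def using lucas_pos by simp
  have b: "2*a \<le> b" unfolding a_def b_def using lucas_ge2[of i] assms(1) by linarith
  have F: "F > 0" unfolding F_def using assms(2) fib_neq_0_nat by simp
  have G: "0 < G" "G \<le> F" unfolding G_def F_def using assms(2) fib_neq_0_nat[of "k-2"] fib_mono[of "k-2" k]
    by auto
  have cop: "coprime a b" unfolding a_def b_def using lucas_coprime2[of i] by (simp only: coprime_int_iff)
  have c: "c = F*b - G*a"
  proof -
    have "int (lucas (i + k) + fib (k-2) * lucas i) = int (fib k * lucas (i+2))"
      using lucas_k[of k i] assms(2) by simp
    thus ?thesis unfolding a_def b_def c_def F_def G_def by simp
  qed
  have r: "r = (a-1) div F" unfolding r_def a_def F_def by simp
  have pos: "lucas i > 0" "lucas (i+2) > 0" "lucas (i+k) > 0" using lucas_pos by auto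
  have "p_frobenius 0 [lucas i, lucas (i + 2), lucas (i + k)] =
     (GREATEST n. \<not> (\<exists>x y z. x \<ge> 0 \<and> y \<ge> 0 \<and> z \<ge> 0 \<and> n = a*x + b*y + c*z))"
    unfolding p_frobenius_def a_def b_def c_def using num_reps3[OF pos] by simp
  also have "\<dots> = (if r = 0 \<or> (r \<ge> 1 \<and> (a - r*F)*b > G*a)
     then (a - 1)*b - a*(r*G + 1) else (r*F - 1)*b - a*((r - 1)*G + 1))"
    by (rule frob_abstract[OF a b F G cop c r])
  finally show ?thesis unfolding a_def b_def F_def G_def by simp
qed

end
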